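(* Let $d\ge2$, $p\in[1,\infty)$ and $f\in W^{1,\infty}(\mathbb{R}^d)$ real-valued. Set $\lambda_n=\frac{11}{8}2^n$ and $t_n=\frac{8}{11}\pi n2^{-n}$. Then there is $N_0\in\mathbb{N}^+$ such that for all sufficiently large $n$, $$\big\|\cos\big(\lambda_n(x_1-t_nf(x))\big)\big\|_{L^p([0,2\pi2^{-N_0}]^d)}\ge 2^{-\frac dpN_0-2},$$ where $x=(x_1,\dots,x_d)$. *)

theory Defs
  imports "HOL-Analysis.Analysis"
begin

text \<open>Real-valued W^{1,\<infinity>}(R^d), identified with the space of bounded Lipschitz functions
  (every W^{1,\<infinity>} class has a unique bounded Lipschitz representative, and conversely).\<close>
definition W1_infinity :: "('a::euclidean_space \<Rightarrow> real) \<Rightarrow> bool" where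
  "W1_infinity f \<longleftrightarrow> bounded (range f) \<and> (\<exists>L. L-lipschitz_on UNIV f)"

definition Lp_norm_on :: "real \<Rightarrow> ('a::euclidean_space) set \<Rightarrow> ('a \<Rightarrow> real) \<Rightarrow> real" where
  "Lp_norm_on p A g = (LINT x:A|lborel. \<bar>g x\<bar> powr p) powr (1/p)"

end

theory Submission
  imports Defs "HOL-Real_Asymp.Real_Asymp"
begin

lemma sin_diff_le: "\<bar>sin u - sin v\<bar> \<le> \<bar>u - v\<bar>" for u v :: real
proof -
  have "\<bar>sin u - sin v\<bar> = 2 * \<bar>sin ((u - v) / 2)\<bar> * \<bar>cos ((u + v) / 2)\<bar>"
    unfolding sin_diff_sin abs_mult by simp
  also have "\<dots> \<le> 2 * \<bar>(u - v) / 2\<bar> * 1"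
    by (intro mult_left_mono mult_mono abs_sin_x_le_abs_x abs_cos_le_one) auto
  finally show ?thesis by simp
qed

lemma key_pw:
  fixes phi eps p :: real
  assumes "\<bar>eps\<bar> \<le> 1/10" "p \<ge> 1"
  shows "\<bar>cos phi\<bar> powr p + \<bar>cos (phi + pi/2 + eps)\<bar> powr p \<ge> (1/2) powr p"
proof (cases "\<bar>cos phi\<bar> \<ge> 1/2")
  case True
  then have "(1/2) powr p \<le> \<bar>cos phi\<bar> powr p" by (intro powr_mono2) (use assms in auto)
  then show ?thesis by (smt (verit) powr_ge_zero)
next
  case False
  have c: "cos (phi + pi/2 + eps) = - sin (phi + eps)"
    by (simp add: cos_add sin_add add.commute add.left_commute)
  have "(sin phi)^2 = 1 - (cos phi)^2" by (simp add: sin_squared_eq)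
  moreover have "\<bar>cos phi\<bar>^2 < (1/2)^2" using False by (intro power_strict_mono) auto
  ultimately have "(7/10)^2 < \<bar>sin phi\<bar>^2" by (simp add: power2_eq_square)
  then have s: "\<bar>sin phi\<bar> > 7/10"
    by (rule power2_less_imp_less) simp
  have "\<bar>sin (phi + eps) - sin phi\<bar> \<le> \<bar>eps\<bar>" using sin_diff_le[of "phi + eps" phi] by simp
  with s assms have "\<bar>cos (phi + pi/2 + eps)\<bar> \<ge> 1/2" unfolding c by linarith
  then have "(1/2) powr p \<le> \<bar>cos (phi + pi/2 + eps)\<bar> powr p" by (intro powr_mono2) (use assms in auto)
  then show ?thesis by (smt (verit) powr_ge_zero)
qed

theorem lemma3p5:
  fixes f :: "real^'n \<Rightarrow> real" and p :: real and i :: 'n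
  assumes "CARD('n) \<ge> 2" and "p \<ge> 1" and "W1_infinity f"
  shows "\<exists>N0::nat. N0 \<ge> 1 \<and>
    (\<forall>\<^sub>F n in sequentially.
       Lp_norm_on p (cbox 0 (\<chi> j. 2 * pi * 2 powr (- real N0)))
         (\<lambda>x. cos ((11/8 * 2 ^ n) * (x $ i - (8/11 * pi * real n * 2 powr (- real n)) * f x)))
       \<ge> 2 powr (- (real CARD('n) / p) * real N0 - 2))"
proof (intro exI[of _ 1] conjI)
  obtain L where L: "L-lipschitz_on UNIV f" using assms(3) unfolding W1_infinity_def by blast
  have L0: "L \<ge> 0" using lipschitz_on_nonneg[OF L] .
  have fc: "continuous_on UNIV f" using lipschitz_on_continuous_on[OF L] .
  have lim: "(\<lambda>n. real n / 2^n) \<longlonglongrightarrow> 0" by real_asymp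
  have "(\<lambda>n. (pi * pi * L * 4 / 11) * (real n / 2^n)) \<longlonglongrightarrow> (pi * pi * L * 4 / 11) * 0"
    by (intro tendsto_mult lim tendsto_const)
  then have ev: "\<forall>\<^sub>F n in sequentially. (pi * pi * L * 4 / 11) * (real n / 2^n) < 1/10"
    by (intro order_tendstoD(2)) auto
  show "\<forall>\<^sub>F n in sequentially.
       Lp_norm_on p (cbox 0 (\<chi> j. 2 * pi * 2 powr (- real (1::nat))))
         (\<lambda>x. cos ((11/8 * 2 ^ n) * (x $ i - (8/11 * pi * real n * 2 powr (- real n)) * f x)))
       \<ge> 2 powr (- (real CARD('n) / p) * real (1::nat) - 2)"
    using ev
  proof eventually_elim
    case (elim n)
    define lam :: real where "lam = 11/8 * 2 ^ n"
    define t :: real where "t = 8/11 * pi * real n * 2 powr (- real n)"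
    define h where "h = pi / (2 * lam)"
    define e where "e = axis i (1::real)"
    define c where "c = h *\<^sub>R e"
    define b :: "real^'n" where "b = (\<chi> j. 2 * pi * 2 powr (- real (1::nat)))"
    define g where "g = (\<lambda>x. \<bar>cos (lam * (x $ i - t * f x))\<bar> powr p)"
    have lam0: "lam > 0" unfolding lam_def by simp
    have lt: "lam * t = pi * real n"
      unfolding lam_def t_def by (simp add: powr_minus powr_realpow field_simps)
    have h0: "h > 0" unfolding h_def using lam0 by simp
    have hle: "h \<le> 2" unfolding h_def lam_def
      using pi_less_4 by (simp add: field_simps) (smt (verit) one_le_power)
    have b_eq: "b = (\<chi> j. pi)" unfolding b_def by (simp add: powr_minus)
    have gc: "continuous_on UNIV g" unfolding g_def
      by (intro continuous_on_powr' continuous_intros fc) (use assms(2) in auto)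
    have gnn: "\<And>x. g x \<ge> 0" unfolding g_def by simp
    have c_i: "c $ j = (if j = i then h else 0)" for j
      unfolding c_def e_def by (simp add: axis_def)
    have nc: "norm c = h" unfolding c_def e_def using h0 by simp
    have eps: "\<bar>pi * real n * (f (c + x) - f x)\<bar> \<le> 1/10" for x
    proof -
      have "\<bar>f (c + x) - f x\<bar> \<le> L * h"
        using lipschitz_onD[OF L, of "c + x" x] by (simp add: dist_norm nc dist_real_def)
      then have "\<bar>pi * real n * (f (c + x) - f x)\<bar> \<le> pi * real n * (L * h)"
        by (simp add: abs_mult mult_left_mono)
      also have "\<dots> = (pi * pi * L * 4 / 11) * (real n / 2^n)"
        unfolding h_def lam_def by (simp add: field_simps)
      finally show ?thesis using elim by linarith
    qed
    have pw: "g x + g (c + x) \<ge> (1/2) powr p" for x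
    proof -
      have "lam * ((c + x) $ i - t * f (c + x))
          = lam * (x $ i - t * f x) + pi/2 + (- (pi * real n * (f (c + x) - f x)))"
      proof -
        have lh: "lam * h = pi / 2" unfolding h_def using lam0 by simp
        have "lam * ((c + x) $ i - t * f (c + x)) = lam * x $ i + lam * h - (lam * t) * f (c + x)"
          by (simp add: c_i algebra_simps)
        moreover have "lam * (x $ i - t * f x) = lam * x $ i - (lam * t) * f x"
          by (simp add: algebra_simps)
        moreover have "pi * real n * (f (c + x) - f x) = pi * real n * f (c + x) - pi * real n * f x"
          by (simp add: algebra_simps)
        ultimately show ?thesis unfolding lh lt by linarith
      qed
      then show ?thesis unfolding g_def
        using key_pw[OF _ assms(2), of "- (pi * real n * (f (c + x) - f x))" "lam * (x $ i - t * f x)"]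
          eps[of x] by simp
    qed
    define Q where "Q = cbox 0 b"
    define Q' where "Q' = cbox 0 (b - c)"
    have intg: "g integrable_on cbox u v" for u v
      by (rule integrable_continuous) (rule continuous_on_subset[OF gc], simp)
    have intg2: "(\<lambda>x. g x + g (c + x)) integrable_on cbox u v" for u v
      by (rule integrable_continuous) (intro continuous_on_subset[OF gc] continuous_intros continuous_on_compose2[OF gc]; simp)
    have shift: "((g \<circ> (+) c) has_integral integral (cbox c b) g) Q'"
      unfolding Q'_def using has_integral_shift_cbox_iff[of g c _ 0 "b - c"] intg[of c b]
      by (simp add: integrable_integral)
    have cnn: "c $ j \<ge> 0" for j using h0 by (simp add: c_i)
    have sub1: "cbox 0 (b - c) \<subseteq> cbox 0 b"
    proof
      fix x assume x: "x \<in> cbox 0 (b - c)"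
      show "x \<in> cbox 0 b" unfolding mem_box_cart
      proof
        fix j
        have "0 $ j \<le> x $ j \<and> x $ j \<le> (b - c) $ j" using x unfolding mem_box_cart by blast
        then show "0 $ j \<le> x $ j \<and> x $ j \<le> b $ j" using cnn[of j] by simp
      qed
    qed
    have sub2: "cbox c b \<subseteq> cbox 0 b"
    proof
      fix x assume x: "x \<in> cbox c b"
      show "x \<in> cbox 0 b" unfolding mem_box_cart
      proof
        fix j
        have "c $ j \<le> x $ j \<and> x $ j \<le> b $ j" using x unfolding mem_box_cart by blast
        then show "0 $ j \<le> x $ j \<and> x $ j \<le> b $ j" using cnn[of j] by simp
      qed
    qed
    have "integral Q' (\<lambda>x. (1/2) powr p) \<le> integral Q' (\<lambda>x. g x + g (c + x))"
      unfolding Q'_def by (intro integral_le intg2 pw integrable_const)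
    also have "\<dots> = integral Q' g + integral (cbox c b) g"
      using integral_add[OF intg[of 0 "b - c"], of "\<lambda>x. g (c + x)"] shift
      unfolding Q'_def by (simp add: o_def has_integral_integrable_integral integrable_integral)
    also have "integral Q' g \<le> integral Q g"
      unfolding Q'_def Q_def
      by (intro integral_subset_le intg gnn) (use sub1 sub2 in \<open>auto simp: gnn\<close>)
    also have "integral (cbox c b) g \<le> integral Q g"
      unfolding Q_def
      by (intro integral_subset_le intg gnn) (use sub1 sub2 in \<open>auto simp: gnn\<close>)
    finally have I1: "integral Q' (\<lambda>x. (1/2) powr p) \<le> 2 * integral Q g" by simp
    have cQ': "Henstock_Kurzweil_Integration.content Q' \<ge> 1"
    proof -
      have ne: "Q' \<noteq> {}" unfolding Q'_def using hle pi_gt3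
        by (auto simp: b_eq c_i interval_ne_empty_cart)
      show ?thesis unfolding content_cbox_cart[OF ne[unfolded Q'_def]] Q'_def
        using hle pi_gt3 by (intro prod_ge_1) (auto simp: b_eq c_i)
    qed
    have "(1/2) powr p \<le> integral Q' (\<lambda>x. (1/2) powr p)"
      unfolding Q'_def integral_const using cQ' Q'_def
      by (simp add: mult_le_cancel_right1 powr_ge_zero) 
    with I1 have I2: "integral Q g \<ge> 2 powr (- p - 1)"
      by (simp add: powr_diff powr_minus divide_simps powr_divide)
    have lint: "(LINT x:Q|lborel. g x) = integral Q g"
      apply (rule set_borel_integral_eq_integral(2))
      unfolding set_integrable_def Q_def
      by (rule borel_integrable_compact) (auto intro: continuous_on_subset[OF gc])
    have "2 powr (- (real CARD('n) / p) * real (1::nat) - 2)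
        = (2 powr (- real CARD('n) - 2 * p)) powr (1/p)"
      using assms(2) by (simp add: powr_powr field_simps)
    also have "\<dots> \<le> (integral Q g) powr (1/p)"
    proof (rule powr_mono2)
      have "2 powr (- real CARD('n) - 2 * p) \<le> 2 powr (- p - 1)"
        using assms(1,2) by simp
      then show "2 powr (- real CARD('n) - 2 * p) \<le> integral Q g" using I2 by linarith
    qed (use assms(2) in auto)
    also have "\<dots> = Lp_norm_on p Q (\<lambda>x. cos (lam * (x $ i - t * f x)))"
      using lint unfolding Lp_norm_on_def g_def by simp
    finally show ?case unfolding Q_def b_def lam_def t_def .
  qed
qed simp

end
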